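(* Let $c(u),p(u),s(u)$ be arbitrary smooth functions. For every smooth function $f(u)$ define $H_f=\int h_f\,dx$ with $$h_f=f-\frac{\epsilon^2}{24}c\,f'''u_x^2+\epsilon^4\Big[\Big(p\,f'''+\frac{c^2f^{(4)}}{480}\Big)u_{xx}^2-\Big(\frac{c\,c''f^{(4)}}{1152}+\frac{c\,c'f^{(5)}}{1152}+\frac{c^2f^{(6)}}{3456}+\frac{p'f^{(4)}}{6}+\frac{p\,f^{(5)}}{6}-s\,f'''\Big)u_x^4\Big],$$ where $c=c(u)$, $p=p(u)$, $s=s(u)$, $f=f(u)$ and primes denote $d/du$. Then for any two smooth functions $f,g$, $$\{H_f,H_g\}=O(\epsilon^6),$$ i.e. $\mathcal E\big(\frac{\delta H_f}{\delta u(x)}\partial_x\frac{\delta H_g}{\delta u(x)}\big)=O(\epsilon^6)$. In particular, since $H_{u^3/6}=\int[\frac{u^3}{6}-\epsilon^2\frac{c}{24}u_x^2+\epsilon^4(p\,u_{xx}^2+s\,u_x^4)]dx$, every flow $u_s+\partial_x\frac{\delta H_f}{\delta u(x)}=0$ is, modulo $O(\epsilon^6)$, a symmetry of $u_t+\partial_x\frac{\delta H_{u^3/6}}{\delta u(x)}=0$. *)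

theory Defs
  imports "HOL-Analysis.Analysis" "HOL-Library.Landau_Symbols"
begin

definition smooth :: "(real \<Rightarrow> real) \<Rightarrow> bool" where
  "smooth f \<longleftrightarrow> (\<forall>n. (deriv ^^ n) f differentiable_on UNIV)"

text \<open>Local densities are functions of the jet U, where U 0 = u, U 1 = u_x,
  U 2 = u_xx, ..., U k = the k-th x-derivative of u.\<close>
type_synonym jetfun = "(nat \<Rightarrow> real) \<Rightarrow> real"

definition jet_pd :: "nat \<Rightarrow> jetfun \<Rightarrow> jetfun" where
  "jet_pd k F U = deriv (\<lambda>t. F (U(k := t))) (U k)"

text \<open>Total x-derivative, exact for densities depending only on u_0, ..., u_(N-1).\<close>
definition total_D :: "nat \<Rightarrow> jetfun \<Rightarrow> jetfun" where
  "total_D N F U = (\<Sum>k<N. U (Suc k) * jet_pd k F U)"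

definition var_deriv :: "nat \<Rightarrow> jetfun \<Rightarrow> jetfun" where
  "var_deriv N F U = (\<Sum>k<N. (-1) ^ k * (total_D N ^^ k) (jet_pd k F) U)"

definition ham_density ::
  "(real \<Rightarrow> real) \<Rightarrow> (real \<Rightarrow> real) \<Rightarrow> (real \<Rightarrow> real) \<Rightarrow> (real \<Rightarrow> real) \<Rightarrow> real \<Rightarrow> jetfun" where
  "ham_density c p s f eps U =
     (let u = U 0; ux = U 1; uxx = U 2; d = (\<lambda>n g. (deriv ^^ n) g u) in
        f u - eps ^ 2 / 24 * c u * d 3 f * ux ^ 2
      + eps ^ 4 * ((p u * d 3 f + (c u) ^ 2 * d 4 f / 480) * uxx ^ 2
          - (c u * d 2 c * d 4 f / 1152 + c u * d 1 c * d 5 f / 1152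
             + (c u) ^ 2 * d 6 f / 3456 + d 1 p * d 4 f / 6 + p u * d 5 f / 6
             - s u * d 3 f) * ux ^ 4))"

definition bracket_density :: "nat \<Rightarrow> jetfun \<Rightarrow> jetfun \<Rightarrow> jetfun" where
  "bracket_density N h1 h2 U = var_deriv N h1 U * total_D N (var_deriv N h2) U"

end

theory Submission
  imports Defs
begin

datatype var = Ev | Cv | Uv nat | Fv nat nat
datatype ord3 = LT | EQ | GT

type_synonym mono = "(var \<times> nat) list"
type_synonym spoly = "(int \<times> mono) list"

definition cmpn :: "nat \<Rightarrow> nat \<Rightarrow> ord3" where
  "cmpn a b = (if a < b then LT else if a = b then EQ else GT)"

fun cmpv :: "var \<Rightarrow> var \<Rightarrow> ord3" where
  "cmpv Ev Ev = EQ" | "cmpv Ev _ = LT" | "cmpv _ Ev = GT"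
| "cmpv Cv Cv = EQ" | "cmpv Cv _ = LT" | "cmpv _ Cv = GT"
| "cmpv (Uv a) (Uv b) = cmpn a b" | "cmpv (Uv _) _ = LT" | "cmpv _ (Uv _) = GT"
| "cmpv (Fv i n) (Fv j m) = (if i = j then cmpn n m else cmpn i j)"

fun cmpm :: "mono \<Rightarrow> mono \<Rightarrow> ord3" where
  "cmpm [] [] = EQ" | "cmpm [] _ = LT" | "cmpm _ [] = GT"
| "cmpm ((v,e)#m) ((w,f)#n) = (if cmpv v w = EQ then (if e = f then cmpm m n else cmpn e f) else cmpv v w)"

fun mmul :: "mono \<Rightarrow> mono \<Rightarrow> mono" where
  "mmul [] n = n" | "mmul m [] = m"
| "mmul ((v,e)#m) ((w,f)#n) = (if cmpv v w = LT then (v,e) # mmul m ((w,f)#n)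
     else if cmpv v w = GT then (w,f) # mmul ((v,e)#m) n
     else (v,e+f) # mmul m n)"

fun padd :: "spoly \<Rightarrow> spoly \<Rightarrow> spoly" where
  "padd [] q = q" | "padd p [] = p"
| "padd ((a,m)#p) ((b,n)#q) = (if cmpm m n = LT then (a,m) # padd p ((b,n)#q)
     else if cmpm m n = GT then (b,n) # padd ((a,m)#p) q
     else if a + b = 0 then padd p q else (a+b,m) # padd p q)"

fun pnorm :: "spoly \<Rightarrow> spoly" where
  "pnorm [] = []"
| "pnorm [t] = (if fst t = 0 then [] else [t])"
| "pnorm (x#y#zs) = padd (pnorm (take (Suc (Suc (length zs)) div 2) (x#y#zs))) (pnorm (drop (Suc (Suc (length zs)) div 2) (x#y#zs)))"

definition tmul :: "int \<Rightarrow> mono \<Rightarrow> spoly \<Rightarrow> spoly" where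
  "tmul a m q = map (\<lambda>(b,n). (a*b, mmul m n)) q"

definition pmul :: "spoly \<Rightarrow> spoly \<Rightarrow> spoly" where
  "pmul p q = pnorm (concat (map (\<lambda>(a,m). tmul a m q) p))"

fun dv :: "nat \<Rightarrow> var \<Rightarrow> spoly" where
  "dv k (Uv j) = (if j = k then [(1,[])] else [])"
| "dv k (Fv i n) = (if k = 0 then [(1,[(Fv i (Suc n),1)])] else [])"
| "dv k _ = []"

definition mk :: "var \<Rightarrow> nat \<Rightarrow> mono" where
  "mk v e = (if e = 0 then [] else [(v,e)])"

fun spdm :: "nat \<Rightarrow> mono \<Rightarrow> spoly" where
  "spdm k [] = []"
| "spdm k ((v,e)#m) = tmul (int e) (mk v (e - 1)) (tmul 1 m (dv k v)) @ tmul 1 [(v,e)] (spdm k m)"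

definition spd :: "nat \<Rightarrow> spoly \<Rightarrow> spoly" where
  "spd k p = pnorm (concat (map (\<lambda>(a,m). tmul a [] (spdm k m)) p))"

fun uidx :: "var \<Rightarrow> nat" where "uidx (Uv j) = j" | "uidx _ = 0"
fun mxl :: "nat list \<Rightarrow> nat" where "mxl [] = 0" | "mxl (x#xs) = max x (mxl xs)"
definition maxu :: "spoly \<Rightarrow> nat" where
  "maxu p = mxl (map (\<lambda>t. mxl (map (\<lambda>ve. uidx (fst ve)) (snd t))) p)"

definition sD :: "spoly \<Rightarrow> spoly" where
  "sD p = pnorm (concat (map (\<lambda>k. tmul 1 [(Uv (Suc k),1)] (spd k p)) [0..<Suc (maxu p)]))"

definition sE :: "spoly \<Rightarrow> spoly" where
  "sE p = pnorm (concat (map (\<lambda>k. tmul ((-1)^k) [] ((sD ^^ k) (spd k p))) [0..<Suc (maxu p)]))"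

fun hornE :: "spoly \<Rightarrow> nat \<Rightarrow> nat \<Rightarrow> spoly" where
  "hornE p k 0 = spd k p"
| "hornE p k (Suc j) = padd (spd k p) (tmul (-1) [] (sD (hornE p (Suc k) j)))"


section \<open>Semantics\<close>

definition evalm :: "(var \<Rightarrow> real) \<Rightarrow> mono \<Rightarrow> real" where
  "evalm \<rho> m = prod_list (map (\<lambda>(v,e). \<rho> v ^ e) m)"

definition evalp :: "(var \<Rightarrow> real) \<Rightarrow> spoly \<Rightarrow> real" where
  "evalp \<rho> p = sum_list (map (\<lambda>(a,m). of_int a * evalm \<rho> m) p)"

lemma evalm_Nil[simp]: "evalm \<rho> [] = 1" by (simp add: evalm_def)
lemma evalm_Cons[simp]: "evalm \<rho> ((v,e)#m) = \<rho> v ^ e * evalm \<rho> m" by (simp add: evalm_def)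
lemma evalm_append[simp]: "evalm \<rho> (m @ n) = evalm \<rho> m * evalm \<rho> n" by (simp add: evalm_def)
lemma evalp_Nil[simp]: "evalp \<rho> [] = 0" by (simp add: evalp_def)
lemma evalp_Cons[simp]: "evalp \<rho> ((a,m)#p) = of_int a * evalm \<rho> m + evalp \<rho> p" by (simp add: evalp_def)
lemma evalp_append[simp]: "evalp \<rho> (p @ q) = evalp \<rho> p + evalp \<rho> q" by (simp add: evalp_def)
lemma evalp_concat: "evalp \<rho> (concat ps) = (\<Sum>p\<leftarrow>ps. evalp \<rho> p)"
  by (induction ps) auto

lemma cmpn_EQ: "cmpn a b = EQ \<Longrightarrow> a = b" by (auto simp: cmpn_def split: if_splits)
lemma cmpv_EQ: "cmpv v w = EQ \<Longrightarrow> v = w"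
  by (induction v w rule: cmpv.induct) (auto dest: cmpn_EQ split: if_splits)
lemma cmpm_EQ: "cmpm m n = EQ \<Longrightarrow> m = n"
  by (induction m n rule: cmpm.induct) (auto dest: cmpv_EQ cmpn_EQ split: if_splits)
lemma ord3_cases3: "x \<noteq> LT \<Longrightarrow> x \<noteq> GT \<Longrightarrow> x = EQ" by (cases x) auto

lemma evalm_mmul[simp]: "evalm \<rho> (mmul m n) = evalm \<rho> m * evalm \<rho> n"
proof (induction m n rule: mmul.induct)
  case (3 v e m w f n)
  show ?case
  proof (cases "cmpv v w = LT \<or> cmpv v w = GT")
    case True then show ?thesis using 3 by (auto simp: algebra_simps)
  next
    case False
    then have "v = w" by (auto intro: cmpv_EQ ord3_cases3)
    then show ?thesis using 3 False by (simp add: power_add algebra_simps)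
  qed
qed auto

lemma evalp_padd[simp]: "evalp \<rho> (padd p q) = evalp \<rho> p + evalp \<rho> q"
proof (induction p q rule: padd.induct)
  case (3 a m p b n q)
  show ?case
  proof (cases "cmpm m n = LT \<or> cmpm m n = GT")
    case True then show ?thesis using 3 by (auto simp: algebra_simps)
  next
    case False
    then have mn: "m = n" by (auto intro: cmpm_EQ ord3_cases3)
    show ?thesis
    proof (cases "a + b = 0")
      case True
      then have "of_int a * evalm \<rho> m + of_int b * evalm \<rho> n = (0::real)"
        using mn by (simp add: distrib_right[symmetric] of_int_add[symmetric] del: of_int_add)
      then show ?thesis using 3 False True mn by (simp add: algebra_simps)
    next
      case False2: False
      then show ?thesis using 3 False mn by (simp add: algebra_simps)
    qed
  qed
qed auto

lemma evalp_take_drop: "evalp \<rho> (take n l) + evalp \<rho> (drop n l) = evalp \<rho> l"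
  by (metis evalp_append append_take_drop_id)

lemma evalp_pnorm[simp]: "evalp \<rho> (pnorm p) = evalp \<rho> p"
proof (induction p rule: pnorm.induct)
  case (3 x y zs)
  then show ?case by (simp only: pnorm.simps evalp_padd evalp_take_drop)
qed (auto split: prod.splits)

lemma evalp_tmul[simp]: "evalp \<rho> (tmul a m q) = of_int a * evalm \<rho> m * evalp \<rho> q"
  by (induction q) (auto simp: tmul_def algebra_simps)

lemma evalp_pmul[simp]: "evalp \<rho> (pmul p q) = evalp \<rho> p * evalp \<rho> q"
  by (induction p) (auto simp: pmul_def evalp_concat algebra_simps)

lemma evalm_mk[simp]: "evalm \<rho> (mk v e) = \<rho> v ^ e" by (simp add: mk_def)

fun env :: "(nat \<Rightarrow> real \<Rightarrow> real) \<Rightarrow> real \<Rightarrow> (nat \<Rightarrow> real) \<Rightarrow> var \<Rightarrow> real" where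
  "env fs eps U Ev = eps"
| "env fs eps U Cv = 1/17280"
| "env fs eps U (Uv j) = U j"
| "env fs eps U (Fv i n) = (deriv ^^ n) (fs i) (U 0)"

lemma DERIV_eq: "(f has_real_derivative X) F \<Longrightarrow> X = Y \<Longrightarrow> (f has_real_derivative Y) F"
  by simp

lemma smooth_DERIV:
  assumes "smooth g"
  shows "((deriv ^^ n) g has_real_derivative (deriv ^^ Suc n) g x) (at x)"
proof -
  have "(deriv ^^ n) g differentiable_on UNIV" using assms by (simp add: smooth_def)
  then have "(deriv ^^ n) g differentiable (at x)"
    by (simp add: differentiable_on_def)
  then show ?thesis by (simp add: DERIV_deriv_iff_real_differentiable)
qed

lemma dv_DERIV:
  assumes sm: "\<forall>i. smooth (fs i)"
  shows "((\<lambda>t. env fs eps (U(k:=t)) v) has_real_derivative evalp (env fs eps (U(k:=x))) (dv k v)) (at x)"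
proof (cases v)
  case (Uv j)
  then show ?thesis by (cases "j = k") auto
next
  case (Fv i n)
  show ?thesis
  proof (cases "k = 0")
    case True
    then show ?thesis using Fv smooth_DERIV[OF sm[rule_format, of i], of n x] by simp
  next
    case False
    then show ?thesis using Fv by simp
  qed
qed auto

lemma spdm_DERIV:
  assumes sm: "\<forall>i. smooth (fs i)"
  shows "((\<lambda>t. evalm (env fs eps (U(k:=t))) m) has_real_derivative evalp (env fs eps (U(k:=x))) (spdm k m)) (at x)"
proof (induction m)
  case Nil
  then show ?case by simp
next
  case (Cons ve m)
  obtain v e where ve: "ve = (v,e)" by fastforce
  let ?r = "\<lambda>t. env fs eps (U(k:=t))"
  have "((\<lambda>t. ?r t v ^ e * evalm (?r t) m) has_real_derivative
      (of_nat e * (evalp (?r x) (dv k v) * ?r x v ^ (e - Suc 0))) * evalm (?r x) m + evalp (?r x) (spdm k m) * ?r x v ^ e) (at x)"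
    by (rule DERIV_mult[OF DERIV_power[OF dv_DERIV[OF sm]] Cons.IH])
  then show ?case unfolding ve evalm_Cons
    by (rule DERIV_eq) (cases e, simp_all add: algebra_simps mk_def fun_upd_def)
qed

lemma evalp_spd: "evalp \<rho> (spd k p) = (\<Sum>(a,m)\<leftarrow>p. of_int a * evalp \<rho> (spdm k m))"
  by (induction p) (auto simp: spd_def evalp_concat)

lemma spd_DERIV:
  assumes sm: "\<forall>i. smooth (fs i)"
  shows "((\<lambda>t. evalp (env fs eps (U(k:=t))) p) has_real_derivative evalp (env fs eps (U(k:=x))) (spd k p)) (at x)"
proof (induction p)
  case Nil
  then show ?case by (simp add: spd_def)
next
  case (Cons am p)
  obtain a m where am: "am = (a,m)" by fastforce
  have "((\<lambda>t. of_int a * evalm (env fs eps (U(k:=t))) m + evalp (env fs eps (U(k:=t))) p) has_real_derivative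
      of_int a * evalp (env fs eps (U(k:=x))) (spdm k m) + evalp (env fs eps (U(k:=x))) (spd k p)) (at x)"
    by (rule DERIV_add[OF DERIV_cmult[OF spdm_DERIV[OF sm]] Cons.IH])
  then show ?case unfolding am evalp_Cons by (rule DERIV_eq) (simp add: evalp_spd fun_upd_def)
qed

definition J :: "(nat \<Rightarrow> real \<Rightarrow> real) \<Rightarrow> real \<Rightarrow> spoly \<Rightarrow> jetfun" where
  "J fs eps p U = evalp (env fs eps U) p"

lemma jet_pd_J:
  assumes sm: "\<forall>i. smooth (fs i)"
  shows "jet_pd k (J fs eps p) = J fs eps (spd k p)"
proof
  fix U
  have "((\<lambda>t. J fs eps p (U(k:=t))) has_real_derivative J fs eps (spd k p) (U(k:=U k))) (at (U k))"
    unfolding J_def by (rule spd_DERIV[OF sm])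
  then show "jet_pd k (J fs eps p) U = J fs eps (spd k p) U"
    unfolding jet_pd_def by (simp add: DERIV_imp_deriv)
qed

section \<open>Bounds on jet variables\<close>

definition ubm :: "nat \<Rightarrow> mono \<Rightarrow> bool" where
  "ubm b m \<longleftrightarrow> (\<forall>v\<in>fst ` set m. uidx v \<le> b)"
definition ub :: "nat \<Rightarrow> spoly \<Rightarrow> bool" where
  "ub b p \<longleftrightarrow> (\<forall>m\<in>snd ` set p. ubm b m)"

lemma mxl_le: "mxl xs \<le> b \<longleftrightarrow> (\<forall>x\<in>set xs. x \<le> b)"
  by (induction xs) auto

lemma maxu_le: "maxu p \<le> b \<longleftrightarrow> ub b p"
  by (auto simp: maxu_def mxl_le ub_def ubm_def)

lemma ub_maxu: "ub (maxu p) p" using maxu_le by blast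

lemma ub_mono: "ub b p \<Longrightarrow> b \<le> b' \<Longrightarrow> ub b' p"
  by (fastforce simp: ub_def ubm_def)

lemma mmul_vars: "fst ` set (mmul m n) \<subseteq> fst ` set m \<union> fst ` set n"
proof (induction m n rule: mmul.induct)
  case (3 v e m w f n)
  show ?case
  proof (cases "cmpv v w = LT")
    case True then show ?thesis using 3(1) by auto
  next
    case F1: False
    show ?thesis
    proof (cases "cmpv v w = GT")
      case True then show ?thesis using 3(2) F1 by auto
    next
      case False then show ?thesis using 3(3) F1 by auto
    qed
  qed
qed auto

lemma padd_monos: "snd ` set (padd p q) \<subseteq> snd ` set p \<union> snd ` set q"
proof (induction p q rule: padd.induct)
  case (3 a m p b n q)
  show ?case
  proof (cases "cmpm m n = LT")
    case True then show ?thesis using 3(1) by auto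
  next
    case F1: False
    show ?thesis
    proof (cases "cmpm m n = GT")
      case True then show ?thesis using 3(2) F1 by auto
    next
      case False then show ?thesis using 3(3,4) F1 by auto
    qed
  qed
qed auto

lemma pnorm_monos: "snd ` set (pnorm p) \<subseteq> snd ` set p"
proof (induction p rule: pnorm.induct)
  case (3 x y zs)
  let ?l = "x#y#zs" and ?h = "Suc (Suc (length zs)) div 2"
  have "snd ` set (pnorm ?l) \<subseteq> snd ` set (pnorm (take ?h ?l)) \<union> snd ` set (pnorm (drop ?h ?l))"
    by (simp only: pnorm.simps padd_monos)
  also have "\<dots> \<subseteq> snd ` set ?l"
    using 3 set_take_subset[of ?h ?l] set_drop_subset[of ?h ?l] by blast
  finally show ?case .
qed auto

lemma ub_append[simp]: "ub b (p @ q) \<longleftrightarrow> ub b p \<and> ub b q"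
  by (auto simp: ub_def)
lemma ub_concat: "(\<forall>p\<in>set ps. ub b p) \<Longrightarrow> ub b (concat ps)"
  by (auto simp: ub_def)
lemma ub_Nil[simp]: "ub b []" by (simp add: ub_def)
lemma ub_padd: "ub b p \<Longrightarrow> ub b q \<Longrightarrow> ub b (padd p q)"
  unfolding ub_def
proof
  fix m assume a: "\<forall>m\<in>snd ` set p. ubm b m" "\<forall>m\<in>snd ` set q. ubm b m" and mm: "m \<in> snd ` set (padd p q)"
  have "m \<in> snd ` set p \<union> snd ` set q" by (rule subsetD[OF padd_monos mm])
  then show "ubm b m" using a by (auto simp del: image_iff)
qed
lemma ub_pnorm: "ub b p \<Longrightarrow> ub b (pnorm p)"
  unfolding ub_def
proof
  fix m assume a: "\<forall>m\<in>snd ` set p. ubm b m" and mm: "m \<in> snd ` set (pnorm p)"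
  have "m \<in> snd ` set p" by (rule subsetD[OF pnorm_monos mm])
  then show "ubm b m" using a by (auto simp del: image_iff)
qed
lemma ubm_mmul: "ubm b m \<Longrightarrow> ubm b n \<Longrightarrow> ubm b (mmul m n)"
  unfolding ubm_def
proof
  fix v assume a: "\<forall>v\<in>fst ` set m. uidx v \<le> b" "\<forall>v\<in>fst ` set n. uidx v \<le> b" and vv: "v \<in> fst ` set (mmul m n)"
  have "v \<in> fst ` set m \<union> fst ` set n" by (rule subsetD[OF mmul_vars vv])
  then show "uidx v \<le> b" using a by (auto simp del: image_iff)
qed
lemma ub_tmul: "ubm b m \<Longrightarrow> ub b q \<Longrightarrow> ub b (tmul a m q)"
  by (auto simp: ub_def tmul_def intro!: ubm_mmul)
lemma ub_dv: "ub b (dv k v)"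
  by (cases "(k,v)" rule: dv.cases) (auto simp: ub_def ubm_def)
lemma ubm_Cons: "ubm b ((v,e)#m) \<longleftrightarrow> uidx v \<le> b \<and> ubm b m"
  by (auto simp: ubm_def)
lemma ubm_mk: "uidx v \<le> b \<Longrightarrow> ubm b (mk v e)"
  by (auto simp: ubm_def mk_def)
lemma ub_spdm: "ubm b m \<Longrightarrow> ub b (spdm k m)"
proof (induction m)
  case (Cons ve m)
  then show ?case
    by (cases ve) (auto simp: ubm_Cons intro!: ub_tmul ubm_mk ub_dv, auto simp: ubm_def)
qed simp
lemma ub_spd: "ub b p \<Longrightarrow> ub b (spd k p)"
  unfolding spd_def
proof (intro ub_pnorm ub_concat ballI)
  fix q assume ubp: "ub b p" and "q \<in> set (map (\<lambda>(a, m). tmul a [] (spdm k m)) p)"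
  then obtain a m where am: "(a,m) \<in> set p" and q: "q = tmul a [] (spdm k m)" by auto
  have "ubm b m" using ubp am by (force simp: ub_def)
  then show "ub b q" unfolding q by (intro ub_tmul ub_spdm) (auto simp: ubm_def)
qed

lemma ub_sD: "ub b p \<Longrightarrow> ub (Suc b) (sD p)"
  unfolding sD_def
proof (intro ub_pnorm ub_concat ballI)
  fix q assume ubp: "ub b p" and q: "q \<in> set (map (\<lambda>k. tmul 1 [(Uv (Suc k), 1)] (spd k p)) [0..<Suc (maxu p)])"
  then obtain k where k0: "k < Suc (maxu p)" and qk: "q = tmul 1 [(Uv (Suc k), 1)] (spd k p)"
    by (auto simp del: upt_Suc)
  have k: "k \<le> maxu p" using k0 by simp
  have "maxu p \<le> b" using ubp maxu_le by blast
  then show "ub (Suc b) q" unfolding qk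
    using k ubp by (intro ub_tmul ub_spd) (auto simp: ubm_def intro: ub_mono)
qed

lemma ub_neg: "ub b p \<Longrightarrow> ub b (tmul a [] p)"
  by (rule ub_tmul) (auto simp: ubm_def)

lemma ub_hornE: "ub b p \<Longrightarrow> ub (b + j) (hornE p k j)"
proof (induction j arbitrary: k)
  case 0 then show ?case by (simp add: ub_spd)
next
  case (Suc j)
  have "ub (Suc (b + j)) (sD (hornE p (Suc k) j))" using Suc by (intro ub_sD) auto
  moreover have "ub (Suc (b + j)) (spd k p)" using Suc.prems by (intro ub_spd) (auto intro: ub_mono)
  ultimately show ?case by (auto intro!: ub_padd ub_neg)
qed

lemma spdm_vanish: "(\<forall>v\<in>fst ` set m. uidx v < k) \<Longrightarrow> spdm k m = []"
proof (induction m)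
  case (Cons ve m)
  obtain v e where ve: "ve = (v,e)" by fastforce
  have "dv k v = []" using Cons.prems ve by (cases "(k,v)" rule: dv.cases) auto
  then show ?case using Cons ve by (simp add: tmul_def)
qed simp

lemma spd_vanish: "maxu p < k \<Longrightarrow> spd k p = []"
proof -
  assume a: "maxu p < k"
  have "ub (maxu p) p" by (rule ub_maxu)
  then have "\<forall>m\<in>snd ` set p. spdm k m = []"
    using a by (auto simp: ub_def ubm_def intro!: spdm_vanish) (fastforce)
  then have "concat (map (\<lambda>(a, m). tmul a [] (spdm k m)) p) = []"
    by (induction p) (auto simp: tmul_def)
  then show ?thesis unfolding spd_def by (metis pnorm.simps(1))
qed

section \<open>Jet-level operators on polynomial densities\<close>

definition sDN :: "nat \<Rightarrow> spoly \<Rightarrow> spoly" where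
  "sDN N p = concat (map (\<lambda>k. tmul 1 [(Uv (Suc k),1)] (spd k p)) [0..<N])"

lemma sum_list_map_upt0: "(\<Sum>k\<leftarrow>[0..<N]. f k) = (\<Sum>k<N. f k)"
  by (simp add: sum_set_upt_conv_sum_list_nat[symmetric] atLeast0LessThan)

lemma J_sDN: "J fs eps (sDN N p) U = (\<Sum>k<N. U (Suc k) * J fs eps (spd k p) U)"
  by (simp add: J_def sDN_def evalp_concat o_def sum_list_map_upt0)

lemma total_D_J:
  assumes sm: "\<forall>i. smooth (fs i)"
  shows "total_D N (J fs eps p) = J fs eps (sDN N p)"
  by (rule ext) (simp add: total_D_def J_sDN jet_pd_J[OF sm])

lemma total_D_sD:
  assumes sm: "\<forall>i. smooth (fs i)" and b: "maxu p < N"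
  shows "total_D N (J fs eps p) = J fs eps (sD p)"
proof
  fix U
  have "J fs eps (sD p) U = (\<Sum>k<Suc (maxu p). U (Suc k) * J fs eps (spd k p) U)"
    by (simp add: J_def sD_def evalp_concat o_def sum_list_map_upt0 del: upt_Suc)
  also have "\<dots> = (\<Sum>k<N. U (Suc k) * J fs eps (spd k p) U)"
  proof (rule sum.mono_neutral_left)
    show "\<forall>i\<in>{..<N} - {..<Suc (maxu p)}. U (Suc i) * J fs eps (spd i p) U = 0"
      by (auto simp: spd_vanish J_def)
  qed (use b in auto)
  finally show "total_D N (J fs eps p) U = J fs eps (sD p) U"
    by (simp add: total_D_J[OF sm] J_sDN)
qed

lemma jet_pd_lin:
  assumes sm: "\<forall>i. smooth (fs i)" and fin: "finite I"
  shows "jet_pd k (\<lambda>U. \<Sum>i\<in>I. c i * J fs eps (q i) U) U = (\<Sum>i\<in>I. c i * J fs eps (spd k (q i)) U)"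
proof -
  have "((\<lambda>t. \<Sum>i\<in>I. c i * evalp (env fs eps (U(k:=t))) (q i)) has_real_derivative
      (\<Sum>i\<in>I. c i * evalp (env fs eps (U(k:=U k))) (spd k (q i)))) (at (U k))"
    by (rule DERIV_sum) (rule DERIV_cmult[OF spd_DERIV[OF sm]])
  then show ?thesis unfolding jet_pd_def J_def by (simp add: DERIV_imp_deriv)
qed

lemma Tpow_J:
  assumes sm: "\<forall>i. smooth (fs i)"
  shows "(total_D N ^^ n) (J fs eps q) = J fs eps ((sDN N ^^ n) q)"
  by (induction n) (simp_all add: total_D_J[OF sm])

lemma total_D_lin:
  assumes sm: "\<forall>i. smooth (fs i)" and fin: "finite I"
  shows "total_D N (\<lambda>U. \<Sum>i\<in>I. c i * J fs eps (q i) U) U = (\<Sum>i\<in>I. c i * total_D N (J fs eps (q i)) U)"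
proof -
  have "total_D N (\<lambda>U. \<Sum>i\<in>I. c i * J fs eps (q i) U) U
      = (\<Sum>k<N. U (Suc k) * (\<Sum>i\<in>I. c i * J fs eps (spd k (q i)) U))"
    by (simp add: total_D_def jet_pd_lin[OF sm fin])
  also have "\<dots> = (\<Sum>i\<in>I. c i * (\<Sum>k<N. U (Suc k) * J fs eps (spd k (q i)) U))"
    by (simp add: sum_distrib_left sum.swap[of _ I] algebra_simps)
  also have "\<dots> = (\<Sum>i\<in>I. c i * total_D N (J fs eps (q i)) U)"
    by (simp add: total_D_J[OF sm] J_sDN)
  finally show ?thesis .
qed

lemma Tpow_lin:
  assumes sm: "\<forall>i. smooth (fs i)" and fin: "finite I"
  shows "(total_D N ^^ n) (\<lambda>U. \<Sum>i\<in>I. c i * J fs eps (q i) U)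
     = (\<lambda>U. \<Sum>i\<in>I. c i * J fs eps ((sDN N ^^ n) (q i)) U)"
proof (induction n)
  case 0 then show ?case by simp
next
  case (Suc n)
  show ?case
    by (rule ext) (simp add: Suc total_D_lin[OF sm fin] total_D_J[OF sm])
qed

lemma var_deriv_lin:
  assumes sm: "\<forall>i. smooth (fs i)" and fin: "finite I"
  shows "var_deriv N (\<lambda>U. \<Sum>i\<in>I. c i * J fs eps (q i) U) U = (\<Sum>i\<in>I. c i * var_deriv N (J fs eps (q i)) U)"
proof -
  have jp: "jet_pd k (\<lambda>U. \<Sum>i\<in>I. c i * J fs eps (q i) U) = (\<lambda>U. \<Sum>i\<in>I. c i * J fs eps (spd k (q i)) U)" for k
    by (rule ext) (rule jet_pd_lin[OF sm fin])
  have "var_deriv N (\<lambda>U. \<Sum>i\<in>I. c i * J fs eps (q i) U) U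
     = (\<Sum>k<N. (-1) ^ k * (\<Sum>i\<in>I. c i * J fs eps ((sDN N ^^ k) (spd k (q i))) U))"
    by (simp add: var_deriv_def jp Tpow_lin[OF sm fin])
  also have "\<dots> = (\<Sum>i\<in>I. c i * (\<Sum>k<N. (-1) ^ k * J fs eps ((sDN N ^^ k) (spd k (q i))) U))"
    by (simp add: sum_distrib_left sum.swap[of _ I] algebra_simps)
  also have "\<dots> = (\<Sum>i\<in>I. c i * var_deriv N (J fs eps (q i)) U)"
    by (simp add: var_deriv_def jet_pd_J[OF sm] Tpow_J[OF sm])
  finally show ?thesis .
qed

lemma var_deriv_add:
  assumes sm: "\<forall>i. smooth (fs i)"
  shows "var_deriv N (\<lambda>U. J fs eps A U + J fs eps B U) U = var_deriv N (J fs eps A) U + var_deriv N (J fs eps B) U"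
proof -
  have "(\<lambda>U. J fs eps A U + J fs eps B U) = (\<lambda>U. \<Sum>i\<in>{0,1::nat}. 1 * J fs eps (if i = 0 then A else B) U)"
    by simp
  then show ?thesis using var_deriv_lin[OF sm, of "{0,1::nat}" N "\<lambda>_. 1" eps "\<lambda>i. if i = 0 then A else B" U]
    by simp
qed

lemma var_deriv_scale:
  assumes sm: "\<forall>i. smooth (fs i)"
  shows "var_deriv N (\<lambda>U. a * J fs eps A U) U = a * var_deriv N (J fs eps A) U"
  using var_deriv_lin[OF sm, of "{0::nat}" N "\<lambda>_. a" eps "\<lambda>_. A" U] by simp

lemma sDN_Nil: "(sDN N ^^ n) [] = []"
proof (induction n)
  case (Suc n)
  have "concat (map (\<lambda>k. tmul 1 [(Uv (Suc k), 1)] (spd k [])) [0..<N]) = []"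
    by (simp add: spd_def tmul_def)
  then show ?case using Suc by (simp add: sDN_def)
qed simp

lemma horn_sem:
  assumes sm: "\<forall>i. smooth (fs i)" and ubp: "ub b p" and bN: "b + j < N"
  shows "J fs eps (hornE p k j) U = (\<Sum>i\<le>j. (-1) ^ i * J fs eps ((sDN N ^^ i) (spd (k + i) p)) U)"
  using bN
proof (induction j arbitrary: k U)
  case 0 then show ?case by simp
next
  case (Suc j)
  let ?X = "hornE p (Suc k) j"
  have ih: "J fs eps ?X = (\<lambda>U. \<Sum>i\<le>j. (-1) ^ i * J fs eps ((sDN N ^^ i) (spd (Suc k + i) p)) U)"
    using Suc by auto
  have mX: "maxu ?X < N"
    using ub_hornE[OF ubp, of j "Suc k"] maxu_le[of ?X "b + j"] Suc.prems by auto
  have "J fs eps (hornE p k (Suc j)) U = J fs eps (spd k p) U - J fs eps (sD ?X) U"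
    by (simp add: J_def)
  also have "J fs eps (sD ?X) U = total_D N (J fs eps ?X) U"
    by (simp add: total_D_sD[OF sm mX])
  also have "\<dots> = (\<Sum>i\<le>j. (-1) ^ i * total_D N (J fs eps ((sDN N ^^ i) (spd (Suc k + i) p))) U)"
    unfolding ih by (rule total_D_lin[OF sm]) simp
  also have "\<dots> = (\<Sum>i\<le>j. (-1) ^ i * J fs eps ((sDN N ^^ Suc i) (spd (k + Suc i) p)) U)"
    by (simp add: total_D_J[OF sm])
  finally have eq: "J fs eps (hornE p k (Suc j)) U = J fs eps (spd k p) U -
     (\<Sum>i\<le>j. (-1) ^ i * J fs eps ((sDN N ^^ Suc i) (spd (k + Suc i) p)) U)" .
  have "(\<Sum>i\<le>Suc j. (-1) ^ i * J fs eps ((sDN N ^^ i) (spd (k + i) p)) U)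
     = (-1) ^ 0 * J fs eps ((sDN N ^^ 0) (spd (k + 0) p)) U +
       (\<Sum>i\<le>j. (-1) ^ Suc i * J fs eps ((sDN N ^^ Suc i) (spd (k + Suc i) p)) U)"
    by (rule sum.atMost_Suc_shift)
  also have "\<dots> = J fs eps (spd k p) U -
     (\<Sum>i\<le>j. (-1) ^ i * J fs eps ((sDN N ^^ Suc i) (spd (k + Suc i) p)) U)"
    by (simp only: power_Suc mult_minus1 mult_minus_left sum_negf) simp
  finally show ?case using eq by simp
qed

lemma var_deriv_J:
  assumes sm: "\<forall>i. smooth (fs i)" and ubp: "ub b p" and bN: "2 * b < N"
  shows "var_deriv N (J fs eps p) U = J fs eps (hornE p 0 b) U"
proof -
  let ?b = "b"
  have mb: "maxu p \<le> b" using ubp maxu_le by blast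
  have "var_deriv N (J fs eps p) U = (\<Sum>k<N. (-1) ^ k * J fs eps ((sDN N ^^ k) (spd k p)) U)"
    by (simp add: var_deriv_def jet_pd_J[OF sm] Tpow_J[OF sm])
  also have "\<dots> = (\<Sum>k\<le>?b. (-1) ^ k * J fs eps ((sDN N ^^ k) (spd k p)) U)"
  proof (rule sum.mono_neutral_right)
    show "\<forall>i\<in>{..<N} - {..?b}. (-1) ^ i * J fs eps ((sDN N ^^ i) (spd i p)) U = 0"
      using mb by (auto simp: spd_vanish sDN_Nil J_def)
  qed (use bN in auto)
  also have "\<dots> = J fs eps (hornE p 0 ?b) U"
    using horn_sem[OF sm ubp, where j = "b" and N = N and k = 0 and U = U and eps = eps] bN
    by simp
  finally show ?thesis .
qed

section \<open>Truncation in the dispersion parameter\<close>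

definition edeg :: "mono \<Rightarrow> nat" where
  "edeg m = sum_list (map (\<lambda>(v,e). if v = Ev then e else 0) m)"
definition stripE :: "mono \<Rightarrow> mono" where
  "stripE m = filter (\<lambda>(v,e). v \<noteq> Ev) m"
definition pmulF :: "(nat \<Rightarrow> bool) \<Rightarrow> spoly \<Rightarrow> spoly \<Rightarrow> spoly" where
  "pmulF P p q = pnorm (concat (map (\<lambda>(a,m). tmul a m (filter (\<lambda>(b,n). P (edeg m + edeg n)) q)) p))"
definition shiftp :: "spoly \<Rightarrow> spoly" where
  "shiftp Q = map (\<lambda>(a,m). (a, mk Ev (edeg m - 6) @ stripE m)) Q"

lemma evalp_filter_split: "evalp \<rho> (filter P q) + evalp \<rho> (filter (\<lambda>x. \<not> P x) q) = evalp \<rho> q"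
  by (induction q) auto

lemma evalp_pmulF: "evalp \<rho> (pmulF P p q) + evalp \<rho> (pmulF (\<lambda>d. \<not> P d) p q) = evalp \<rho> p * evalp \<rho> q"
proof (induction p)
  case (Cons am p)
  obtain a m where am: "am = (a,m)" by fastforce
  let ?Q = "(\<lambda>(b,n). P (edeg m + edeg n))"
  have s: "evalp \<rho> (filter ?Q q) + evalp \<rho> (filter (\<lambda>x. \<not> ?Q x) q) = evalp \<rho> q"
    by (rule evalp_filter_split)
  have e2: "filter (\<lambda>(b,n). \<not> P (edeg m + edeg n)) q = filter (\<lambda>x. \<not> ?Q x) q"
    by (rule filter_cong) auto
  have "evalp \<rho> (pmulF P (am#p) q) + evalp \<rho> (pmulF (\<lambda>d. \<not> P d) (am#p) q)
      = of_int a * evalm \<rho> m * (evalp \<rho> (filter ?Q q) + evalp \<rho> (filter (\<lambda>x. \<not> ?Q x) q))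
        + (evalp \<rho> (pmulF P p q) + evalp \<rho> (pmulF (\<lambda>d. \<not> P d) p q))"
    unfolding am pmulF_def using e2 by (simp add: algebra_simps)
  also have "\<dots> = evalp \<rho> (am#p) * evalp \<rho> q" using s Cons.IH am by (simp add: algebra_simps)
  finally show ?case .
qed (simp add: pmulF_def)

lemma edeg_Nil[simp]: "edeg [] = 0" by (simp add: edeg_def)
lemma edeg_Cons[simp]: "edeg ((v,e)#m) = (if v = Ev then e else 0) + edeg m" by (simp add: edeg_def)

lemma edeg_mmul: "edeg (mmul m n) = edeg m + edeg n"
proof (induction m n rule: mmul.induct)
  case (3 v e m w f n)
  show ?case
  proof (cases "cmpv v w = LT \<or> cmpv v w = GT")
    case True then show ?thesis using 3 by auto
  next
    case False
    then have "v = w" by (auto intro: cmpv_EQ ord3_cases3)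
    then show ?thesis using 3 False by auto
  qed
qed auto

lemma high_pmulF: "\<forall>t\<in>set (pmulF (\<lambda>d. \<not> d < 6) p q). 6 \<le> edeg (snd t)"
proof
  fix t assume t: "t \<in> set (pmulF (\<lambda>d. \<not> d < 6) p q)"
  have "snd t \<in> snd ` set (pmulF (\<lambda>d. \<not> d < 6) p q)" using t by auto
  then have "snd t \<in> snd ` set (concat (map (\<lambda>(a,m). tmul a m (filter (\<lambda>(b,n). \<not> edeg m + edeg n < 6) q)) p))"
    unfolding pmulF_def by (rule subsetD[OF pnorm_monos])
  then show "6 \<le> edeg (snd t)"
    by (auto simp: tmul_def edeg_mmul)
qed

lemma evalm_stripE: "evalm \<rho> m = \<rho> Ev ^ edeg m * evalm \<rho> (stripE m)"
  by (induction m) (auto simp: stripE_def power_add)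

lemma evalp_shift: "\<forall>t\<in>set Q. 6 \<le> edeg (snd t) \<Longrightarrow> evalp \<rho> Q = \<rho> Ev ^ 6 * evalp \<rho> (shiftp Q)"
proof (induction Q)
  case (Cons am Q)
  obtain a m where am: "am = (a,m)" by fastforce
  have "6 \<le> edeg m" using Cons.prems am by auto
  then have "\<rho> Ev ^ edeg m = \<rho> Ev ^ 6 * \<rho> Ev ^ (edeg m - 6)"
    by (metis le_add_diff_inverse power_add)
  then have "evalm \<rho> m = \<rho> Ev ^ 6 * evalm \<rho> (mk Ev (edeg m - 6) @ stripE m)"
    by (subst evalm_stripE) simp
  then show ?case using Cons am by (simp add: shiftp_def algebra_simps)
qed (simp add: shiftp_def)

lemma ub_filter: "ub b q \<Longrightarrow> ub b (filter P q)"
  by (auto simp: ub_def)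

lemma ub_pmulF: "ub b p \<Longrightarrow> ub b q \<Longrightarrow> ub b (pmulF P p q)"
  unfolding pmulF_def
proof (intro ub_pnorm ub_concat ballI)
  fix r assume ubp: "ub b p" and ubq: "ub b q"
    and "r \<in> set (map (\<lambda>(a, m). tmul a m (filter (\<lambda>(b, n). P (edeg m + edeg n)) q)) p)"
  then obtain a m where am: "(a,m) \<in> set p" and r: "r = tmul a m (filter (\<lambda>(b, n). P (edeg m + edeg n)) q)"
    by auto
  have "ubm b m" using ubp am by (force simp: ub_def)
  then show "ub b r" unfolding r by (intro ub_tmul ub_filter ubq)
qed

lemma ub_shiftp: "ub b Q \<Longrightarrow> ub b (shiftp Q)"
  by (auto simp: ub_def ubm_def shiftp_def mk_def stripE_def split: if_splits; fastforce)

lemma env_cont: "isCont (\<lambda>e. env fs e U v) x"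
  by (cases v) auto

lemma evalm_cont: "isCont (\<lambda>e. evalm (env fs e U) m) x"
proof (induction m)
  case (Cons ve m)
  then show ?case
    by (cases ve) (auto intro!: continuous_intros env_cont)
qed simp

lemma evalp_cont: "isCont (\<lambda>e. evalp (env fs e U) p) x"
proof (induction p)
  case (Cons am p)
  then show ?case
    by (cases am) (auto intro!: continuous_intros evalm_cont)
qed simp

lemma bigo_eps6:
  assumes "isCont h 0"
  shows "(\<lambda>e::real. e ^ 6 * h e) \<in> O[at 0](\<lambda>e. e ^ 6)"
proof -
  have "(h \<longlongrightarrow> h 0) (at 0)" using assms by (simp add: isCont_def)
  then have "((\<lambda>e. h e / 1) \<longlongrightarrow> h 0) (at 0)" by simp
  then have "h \<in> O[at 0](\<lambda>_. 1)" by (rule bigoI_tendsto) simp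
  then show ?thesis
    by (rule landau_o.big_1_mult[OF landau_o.big_refl])
qed

section \<open>The concrete densities\<close>

definition Hp :: "nat \<Rightarrow> spoly" where
  "Hp i = [(-720,[(Ev,2), (Cv,1), ((Uv 1),2), ((Fv 0 0),1), ((Fv i 3),1)]), (-15,[(Ev,4), (Cv,1), ((Uv 1),4), ((Fv 0 0),1), ((Fv 0 1),1), ((Fv i 5),1)]), (-15,[(Ev,4), (Cv,1), ((Uv 1),4), ((Fv 0 0),1), ((Fv 0 2),1), ((Fv i 4),1)]), (-5,[(Ev,4), (Cv,1), ((Uv 1),4), ((Fv 0 0),2), ((Fv i 6),1)]), (-2880,[(Ev,4), (Cv,1), ((Uv 1),4), ((Fv 1 0),1), ((Fv i 5),1)]), (-2880,[(Ev,4), (Cv,1), ((Uv 1),4), ((Fv 1 1),1), ((Fv i 4),1)]), (17280,[(Ev,4), (Cv,1), ((Uv 1),4), ((Fv 2 0),1), ((Fv i 3),1)]), (36,[(Ev,4), (Cv,1), ((Uv 2),2), ((Fv 0 0),2), ((Fv i 4),1)]), (17280,[(Ev,4), (Cv,1), ((Uv 2),2), ((Fv 1 0),1), ((Fv i 3),1)]), (17280,[(Cv,1), ((Fv i 0),1)])]"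

lemma maxu_Hp: "maxu (Hp i) = 2"
  by (simp add: Hp_def maxu_def)

lemma ub_Hp: "ub 2 (Hp i)"
  using maxu_le maxu_Hp by (metis order_refl)

lemma computation:
  "hornE (pmulF (\<lambda>d. d < 6) (hornE (Hp 3) 0 2) (sD (hornE (Hp 4) 0 2))) 0 5 = []"
  by code_simp

lemma ham_Hp: "ham_density (fs 0) (fs 1) (fs 2) (fs i) eps U = J fs eps (Hp i) U"
  by (simp add: ham_density_def Let_def J_def Hp_def) (simp add: field_simps)

theorem lemma2p3:
  fixes c p s f g :: "real \<Rightarrow> real" and N :: nat
  assumes "smooth c" and "smooth p" and "smooth s" and "smooth f" and "smooth g"
    and "N \<ge> 16"
  shows "\<forall>U. (\<lambda>eps. var_deriv N
              (bracket_density N (ham_density c p s f eps) (ham_density c p s g eps)) U)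
            \<in> O[at 0](\<lambda>eps. eps ^ 6)"
proof
  fix U :: "nat \<Rightarrow> real"
  define fs where "fs = (\<lambda>i::nat. if i = 0 then c else if i = 1 then p else if i = 2 then s else if i = 3 then f else g)"
  have sm: "\<forall>i. smooth (fs i)" using assms by (simp add: fs_def)
  have fs0: "fs 0 = c" "fs 1 = p" "fs 2 = s" "fs 3 = f" "fs 4 = g" by (simp_all add: fs_def)
  define EF where "EF = hornE (Hp 3) 0 2"
  define EG where "EG = hornE (Hp 4) 0 2"
  define DG where "DG = sD EG"
  define BT where "BT = pmulF (\<lambda>d. d < 6) EF DG"
  define BH where "BH = pmulF (\<lambda>d. \<not> d < 6) EF DG"
  define Z where "Z = hornE (shiftp BH) 0 5"
  have N: "16 \<le> N" using assms by simp
  have ubEF: "ub 5 EF" unfolding EF_def using ub_hornE[OF ub_Hp, of 2 3 0] by (auto intro: ub_mono)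
  have ubEG: "ub 4 EG" unfolding EG_def using ub_hornE[OF ub_Hp, of 2 4 0] by simp
  have ubDG: "ub 5 DG" unfolding DG_def using ub_sD[OF ubEG] by simp
  have ubBT: "ub 5 BT" unfolding BT_def by (rule ub_pmulF[OF ubEF ubDG])
  have ubBH: "ub 5 (shiftp BH)" unfolding BH_def by (rule ub_shiftp[OF ub_pmulF[OF ubEF ubDG]])
  have mEG: "maxu EG < N" using ubEG maxu_le[of EG 4] N by simp
  have comp: "hornE BT 0 5 = []" unfolding BT_def EF_def DG_def EG_def by (rule computation)
  have key: "var_deriv N (bracket_density N (ham_density c p s f eps) (ham_density c p s g eps)) U
      = eps ^ 6 * evalp (env fs eps U) Z" for eps
  proof -
    have hf: "ham_density c p s f eps = J fs eps (Hp 3)"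
      by (rule ext) (metis fs0 ham_Hp)
    have hg: "ham_density c p s g eps = J fs eps (Hp 4)"
      by (rule ext) (metis fs0 ham_Hp)
    have vf: "var_deriv N (J fs eps (Hp 3)) = J fs eps EF"
      unfolding EF_def by (rule ext, rule var_deriv_J[OF sm ub_Hp]) (use N in simp)
    have vg: "var_deriv N (J fs eps (Hp 4)) = J fs eps EG"
      unfolding EG_def by (rule ext, rule var_deriv_J[OF sm ub_Hp]) (use N in simp)
    have tg: "total_D N (J fs eps EG) = J fs eps DG"
      unfolding DG_def by (rule total_D_sD[OF sm mEG])
    have br: "bracket_density N (J fs eps (Hp 3)) (J fs eps (Hp 4)) = (\<lambda>U. J fs eps BT U + J fs eps BH U)"
      by (rule ext) (simp add: bracket_density_def vf vg tg J_def BT_def BH_def evalp_pmulF)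
    have hBH: "J fs eps BH = (\<lambda>U. eps ^ 6 * J fs eps (shiftp BH) U)"
      by (rule ext) (simp add: J_def BH_def evalp_shift[OF high_pmulF])
    have "var_deriv N (bracket_density N (ham_density c p s f eps) (ham_density c p s g eps)) U
        = var_deriv N (J fs eps BT) U + var_deriv N (J fs eps BH) U"
      unfolding hf hg br by (rule var_deriv_add[OF sm])
    also have "var_deriv N (J fs eps BT) U = 0"
      using var_deriv_J[OF sm ubBT, of N eps U] N comp by (simp add: J_def)
    also have "var_deriv N (J fs eps BH) U = eps ^ 6 * var_deriv N (J fs eps (shiftp BH)) U"
      unfolding hBH by (rule var_deriv_scale[OF sm])
    also have "var_deriv N (J fs eps (shiftp BH)) U = evalp (env fs eps U) Z"
      using var_deriv_J[OF sm ubBH, of N eps U] N by (simp add: J_def Z_def)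
    finally show ?thesis by simp
  qed
  have "(\<lambda>eps. eps ^ 6 * evalp (env fs eps U) Z) \<in> O[at 0](\<lambda>eps. eps ^ 6)"
    by (rule bigo_eps6) (rule evalp_cont)
  then show "(\<lambda>eps. var_deriv N (bracket_density N (ham_density c p s f eps) (ham_density c p s g eps)) U)
      \<in> O[at 0](\<lambda>eps. eps ^ 6)"
    by (simp add: key)
qed

end
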